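(* Let $\mathcal{G}$ be a $k$-uniform hypergraph. Then \[ i(\mathcal{G})\geq\frac{\alpha(\mathcal{G})+\beta(\mathcal{G})}{k}. \]
   Context: A $k$-uniform hypergraph $\mathcal{G}$ has vertex set $V(\mathcal{G})=[n]$ and edge set $E(\mathcal{G})$ of $k$-element subsets of $V(\mathcal{G})$. For $\mathbf{x}\in\mathbb{R}^n$, $\mathcal{L}_\mathcal{G}\mathbf{x}^k=\sum_{\{i_1,\ldots,i_k\}\in E(\mathcal{G})}\left(x_{i_1}^k+\cdots+x_{i_k}^k-k\,x_{i_1}\cdots x_{i_k}\right)$. The inverse Perron value of vertex $j$ is $\alpha_j(\mathcal{G})=\min\{\mathcal{L}_\mathcal{G}\mathbf{x}^k : \mathbf{x}\in\mathbb{R}^n_+,\ \sum_{i=1}^n x_i^k=1,\ x_j=0\}$. Let $\alpha(\mathcal{G})=\min_{j\in V(\mathcal{G})}\alpha_j(\mathcal{G})$ (the analytic connectivity) and $\beta(\mathcal{G})=\max_{j\in V(\mathcal{G})}\alpha_j(\mathcal{G})$. For $S\subseteq V(\mathcal{G})$ with $\overline{S}=V(\mathcal{G})\setminus S$, $E(S,\overline{S})$ is the set of edges containing vertices of both $S$ and $\overline{S}$. The isoperimetric number is $i(\mathcal{G})=\min\{|E(S,\overline{S})|/|S| : S\subseteq V(\mathcal{G}),\ 0<|S|\le |V(\mathcal{G})|/2\}$. *)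

theory Defs
  imports Main "HOL-Analysis.Analysis"
begin

text \<open>A k-uniform hypergraph on vertex set [n] = {1..n} is given by its edge set E,
  a set of k-element subsets of {1..n}. Vectors in R^n are functions nat => real,
  only the coordinates 1..n matter.\<close>

definition uniform_hypergraph :: "nat \<Rightarrow> nat \<Rightarrow> nat set set \<Rightarrow> bool" where
  "uniform_hypergraph n k E \<longleftrightarrow> (\<forall>e\<in>E. e \<subseteq> {1..n} \<and> card e = k)"

definition lap_form :: "nat \<Rightarrow> nat set set \<Rightarrow> (nat \<Rightarrow> real) \<Rightarrow> real" where
  "lap_form k E x = (\<Sum>e\<in>E. (\<Sum>i\<in>e. x i ^ k) - real k * (\<Prod>i\<in>e. x i))"

definition inv_perron :: "nat \<Rightarrow> nat \<Rightarrow> nat set set \<Rightarrow> nat \<Rightarrow> real" where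
  "inv_perron n k E j = Inf {lap_form k E x | x.
      (\<forall>i\<in>{1..n}. 0 \<le> x i) \<and> (\<Sum>i=1..n. x i ^ k) = 1 \<and> x j = 0}"

definition analytic_conn :: "nat \<Rightarrow> nat \<Rightarrow> nat set set \<Rightarrow> real" where
  "analytic_conn n k E = Min ((inv_perron n k E) ` {1..n})"

definition beta_hg :: "nat \<Rightarrow> nat \<Rightarrow> nat set set \<Rightarrow> real" where
  "beta_hg n k E = Max ((inv_perron n k E) ` {1..n})"

definition cut_edges :: "nat \<Rightarrow> nat set set \<Rightarrow> nat set \<Rightarrow> nat set set" where
  "cut_edges n E S = {e\<in>E. e \<inter> S \<noteq> {} \<and> e \<inter> ({1..n} - S) \<noteq> {}}"

definition isoperimetric :: "nat \<Rightarrow> nat set set \<Rightarrow> real" where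
  "isoperimetric n E = Min {real (card (cut_edges n E S)) / real (card S) | S.
      S \<subseteq> {1..n} \<and> 0 < card S \<and> real (card S) \<le> real n / 2}"

end

theory Submission
  imports Defs
begin

lemma finite_E:
  assumes "uniform_hypergraph n k E" shows "finite E"
proof -
  have "E \<subseteq> Pow {1..n}" using assms unfolding uniform_hypergraph_def by auto
  thus ?thesis by (rule finite_subset) simp
qed

lemma bdd_lap:
  assumes u: "uniform_hypergraph n k E" and k: "1 \<le> k"
  shows "bdd_below {lap_form k E x | x.
      (\<forall>i\<in>{1..n}. 0 \<le> x i) \<and> (\<Sum>i=1..n. x i ^ k) = 1 \<and> x j = 0}"
proof (rule bdd_belowI)
  fix y assume "y \<in> {lap_form k E x | x.
      (\<forall>i\<in>{1..n}. 0 \<le> x i) \<and> (\<Sum>i=1..n. x i ^ k) = 1 \<and> x j = 0}"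
  then obtain x where y: "y = lap_form k E x" and nn: "\<forall>i\<in>{1..n}. 0 \<le> x i"
    and s: "(\<Sum>i=1..n. x i ^ k) = 1" by blast
  have le1: "x i \<le> 1" if "i \<in> {1..n}" for i
  proof -
    have "x i ^ k \<le> (\<Sum>i=1..n. x i ^ k)"
      by (rule member_le_sum) (use that nn in auto)
    then have "x i ^ k \<le> 1" using s by simp
    then show ?thesis using power_le_one_iff[of "x i" k] nn that k by auto
  qed
  have trm: "(\<Sum>i\<in>e. x i ^ k) - real k * (\<Prod>i\<in>e. x i) \<ge> - real k" if "e \<in> E" for e
  proof -
    have sub: "e \<subseteq> {1..n}" using u that unfolding uniform_hypergraph_def by auto
    have "(\<Sum>i\<in>e. x i ^ k) \<ge> 0" using sub nn by (intro sum_nonneg) auto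
    moreover have "(\<Prod>i\<in>e. x i) \<le> 1" using sub nn le1 by (intro prod_le_1) auto
    moreover have "real k * (\<Prod>i\<in>e. x i) \<le> real k * 1"
      by (rule mult_left_mono) (use calculation in auto)
    ultimately show ?thesis by linarith
  qed
  have "(\<Sum>e\<in>E. - real k) \<le> lap_form k E x"
    unfolding lap_form_def by (rule sum_mono) (use trm in auto)
  then show "- real k * real (card E) \<le> y" using y by (simp add: mult.commute)
qed

lemma test_bound:
  assumes u: "uniform_hypergraph n k E" and k: "1 \<le> k"
    and S: "S \<subseteq> {1..n}" "S \<noteq> {}" and j: "j \<notin> S"
  shows "inv_perron n k E j \<le> (\<Sum>e\<in>cut_edges n E S. real (card (e \<inter> S))) / real (card S)"
proof -
  have fS: "finite S" using S finite_subset by blast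
  have cS: "real (card S) > 0" using fS S by auto
  define c where "c = root k (1 / real (card S))"
  have c0: "c > 0" using cS k unfolding c_def by simp
  have ck: "c ^ k = 1 / real (card S)" unfolding c_def using k cS by (intro real_root_pow_pos) auto
  define x where "x = (\<lambda>i. if i \<in> S then c else 0)"
  have xk: "x i ^ k = (if i \<in> S then 1 / real (card S) else 0)" for i
    unfolding x_def using ck k by auto
  have "(\<Sum>i=1..n. x i ^ k) = (\<Sum>i\<in>S. 1 / real (card S))"
    unfolding xk using sum.inter_restrict[of "{1..n}" "\<lambda>i. 1 / real (card S)" S] Int_absorb1[OF S(1)]
    by simp
  also have "\<dots> = 1" using cS by simp
  finally have s1: "(\<Sum>i=1..n. x i ^ k) = 1" .
  have mem: "lap_form k E x \<in> {lap_form k E x | x.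
      (\<forall>i\<in>{1..n}. 0 \<le> x i) \<and> (\<Sum>i=1..n. x i ^ k) = 1 \<and> x j = 0}"
    using s1 j c0 unfolding x_def by auto
  have ip: "inv_perron n k E j \<le> lap_form k E x"
    unfolding inv_perron_def by (rule cInf_lower[OF mem bdd_lap[OF u k]])
  have fE: "finite E" using finite_E[OF u] .
  have termeq: "(\<Sum>i\<in>e. x i ^ k) - real k * (\<Prod>i\<in>e. x i) =
      (if e \<in> cut_edges n E S then real (card (e \<inter> S)) / real (card S) else 0)" if e: "e \<in> E" for e
  proof -
    have sub: "e \<subseteq> {1..n}" and ce: "card e = k" using u e unfolding uniform_hypergraph_def by auto
    have fe: "finite e" using sub finite_subset by blast
    have sumv: "(\<Sum>i\<in>e. x i ^ k) = real (card (e \<inter> S)) / real (card S)"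
      unfolding xk using sum.inter_restrict[OF fe, of "\<lambda>i. 1 / real (card S)" S] by simp
    show ?thesis
    proof (cases "e \<subseteq> S")
      case True
      have "(\<Prod>i\<in>e. x i) = (\<Prod>i\<in>e. c)" using True unfolding x_def
        by (intro prod.cong) auto
      then have "(\<Prod>i\<in>e. x i) = c ^ k" using ce by simp
      moreover have "e \<inter> S = e" using True by auto
      moreover have "e \<notin> cut_edges n E S" using True unfolding cut_edges_def by auto
      ultimately show ?thesis using sumv ck ce by simp
    next
      case False
      then obtain i where i: "i \<in> e" "i \<notin> S" by auto
      have "(\<Prod>i\<in>e. x i) = 0" using fe i unfolding x_def
        by (intro prod_zero) auto
      moreover have "e \<inter> ({1..n} - S) \<noteq> {}" using i sub by auto
      ultimately show ?thesis using sumv e unfolding cut_edges_def by auto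
    qed
  qed
  have "lap_form k E x = (\<Sum>e\<in>E. if e \<in> cut_edges n E S then real (card (e \<inter> S)) / real (card S) else 0)"
    unfolding lap_form_def using termeq by (intro sum.cong) auto
  also have "\<dots> = (\<Sum>e\<in>cut_edges n E S. real (card (e \<inter> S)) / real (card S))"
    using sum.inter_restrict[OF fE, of "\<lambda>e. real (card (e \<inter> S)) / real (card S)" "cut_edges n E S"]
      Int_absorb1[of "cut_edges n E S" E] by (simp add: cut_edges_def)
  also have "\<dots> = (\<Sum>e\<in>cut_edges n E S. real (card (e \<inter> S))) / real (card S)"
    by (simp add: sum_divide_distrib)
  finally show ?thesis using ip by simp
qed

lemma pair_bound:
  assumes u: "uniform_hypergraph n k E" and k: "1 \<le> k"
    and S: "S \<subseteq> {1..n}" "S \<noteq> {}" "2 * card S \<le> n"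
    and j: "j \<in> {1..n}" "j \<notin> S" and l: "l \<in> S"
  shows "inv_perron n k E j + inv_perron n k E l \<le> real k * real (card (cut_edges n E S)) / real (card S)"
proof -
  define T where "T = {1..n} - S"
  have fS: "finite S" using S finite_subset by blast
  have cS: "real (card S) > 0" using fS S by auto
  have cT: "card T = n - card S" unfolding T_def using S fS by (simp add: card_Diff_subset)
  have cST: "real (card S) \<le> real (card T)" using cT S by simp
  have TS: "{1..n} - T = S" unfolding T_def using S by auto
  have cutT: "cut_edges n E T = cut_edges n E S"
    unfolding cut_edges_def TS unfolding T_def by auto
  have Tne: "T \<noteq> {}" using j unfolding T_def by auto
  have lT: "l \<notin> T" using l unfolding T_def by auto
  have h1: "inv_perron n k E j \<le> (\<Sum>e\<in>cut_edges n E S. real (card (e \<inter> S))) / real (card S)"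
    by (rule test_bound[OF u k S(1,2) j(2)])
  have h2: "inv_perron n k E l \<le> (\<Sum>e\<in>cut_edges n E S. real (card (e \<inter> T))) / real (card T)"
    using test_bound[OF u k _ Tne lT] cutT unfolding T_def by auto
  have "(\<Sum>e\<in>cut_edges n E S. real (card (e \<inter> T))) / real (card T)
      \<le> (\<Sum>e\<in>cut_edges n E S. real (card (e \<inter> T))) / real (card S)"
    by (rule divide_left_mono) (use cST cS in \<open>auto intro: sum_nonneg\<close>)
  with h2 have h3: "inv_perron n k E l \<le> (\<Sum>e\<in>cut_edges n E S. real (card (e \<inter> T))) / real (card S)"
    by linarith
  have ce: "real (card (e \<inter> S)) + real (card (e \<inter> T)) = real k" if "e \<in> cut_edges n E S" for e
  proof -
    have e: "e \<in> E" using that unfolding cut_edges_def by auto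
    have sub: "e \<subseteq> {1..n}" and ck: "card e = k" using u e unfolding uniform_hypergraph_def by auto
    have fe: "finite e" using sub finite_subset by blast
    have "e = (e \<inter> S) \<union> (e \<inter> T)" using sub unfolding T_def by auto
    moreover have "(e \<inter> S) \<inter> (e \<inter> T) = {}" unfolding T_def by auto
    ultimately have "card e = card (e \<inter> S) + card (e \<inter> T)"
      using fe by (metis card_Un_disjoint finite_Int)
    then show ?thesis using ck by simp
  qed
  have "(\<Sum>e\<in>cut_edges n E S. real (card (e \<inter> S))) + (\<Sum>e\<in>cut_edges n E S. real (card (e \<inter> T)))
      = (\<Sum>e\<in>cut_edges n E S. real k)"
    unfolding sum.distrib[symmetric] using ce by (intro sum.cong) auto
  also have "\<dots> = real k * real (card (cut_edges n E S))" by simp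
  finally have eq: "(\<Sum>e\<in>cut_edges n E S. real (card (e \<inter> S))) + (\<Sum>e\<in>cut_edges n E S. real (card (e \<inter> T)))
      = real k * real (card (cut_edges n E S))" .
  have "inv_perron n k E j + inv_perron n k E l \<le>
     ((\<Sum>e\<in>cut_edges n E S. real (card (e \<inter> S))) + (\<Sum>e\<in>cut_edges n E S. real (card (e \<inter> T)))) / real (card S)"
    using h1 h3 by (simp add: add_divide_distrib)
  then show ?thesis using eq by simp
qed

theorem theorem3p3:
  fixes n k :: nat and E :: "nat set set"
  assumes "2 \<le> k" and "2 \<le> n"
    and "uniform_hypergraph n k E"
  shows "isoperimetric n E \<ge> (analytic_conn n k E + beta_hg n k E) / real k"
proof -
  have u: "uniform_hypergraph n k E" and k: "1 \<le> k" using assms by auto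
  define f where "f = inv_perron n k E"
  have fin: "finite (f ` {1..n})" and ne: "f ` {1..n} \<noteq> {}" using assms by auto
  obtain m where m: "m \<in> {1..n}" "beta_hg n k E = f m"
    using Max_in[OF fin ne] unfolding beta_hg_def f_def by auto
  have amin: "analytic_conn n k E \<le> f j" if "j \<in> {1..n}" for j
    unfolding analytic_conn_def f_def[symmetric] using fin that by (intro Min_le) auto
  have key: "(analytic_conn n k E + beta_hg n k E) / real k
      \<le> real (card (cut_edges n E S)) / real (card S)"
    if S: "S \<subseteq> {1..n}" "0 < card S" "real (card S) \<le> real n / 2" for S
  proof -
    have Sne: "S \<noteq> {}" using S by auto
    have S2: "2 * card S \<le> n" using S(3) by linarith
    have "\<exists>j. j \<in> {1..n} \<and> j \<notin> S"
    proof (rule ccontr)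
      assume "\<not> ?thesis" then have "{1..n} \<subseteq> S" by auto
      then have "n \<le> card S" using card_mono[OF _ \<open>{1..n} \<subseteq> S\<close>] S finite_subset by fastforce
      then show False using S2 S(2) by linarith
    qed
    then obtain j where j: "j \<in> {1..n}" "j \<notin> S" by auto
    obtain l where l: "l \<in> S" using Sne by auto
    have lin: "l \<in> {1..n}" using l S by auto
    have sum_le: "analytic_conn n k E + beta_hg n k E \<le> real k * real (card (cut_edges n E S)) / real (card S)"
    proof (cases "m \<in> S")
      case True
      have "f j + f m \<le> real k * real (card (cut_edges n E S)) / real (card S)"
        unfolding f_def by (rule pair_bound[OF u k S(1) Sne S2 j True])
      then show ?thesis using amin[OF j(1)] m by linarith
    next
      case False
      have "f m + f l \<le> real k * real (card (cut_edges n E S)) / real (card S)"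
        unfolding f_def by (rule pair_bound[OF u k S(1) Sne S2 m(1) False l])
      then show ?thesis using amin[OF lin] m by linarith
    qed
    have kp: "real k > 0" using k by simp
    have "(analytic_conn n k E + beta_hg n k E) / real k \<le>
        (real k * real (card (cut_edges n E S)) / real (card S)) / real k"
      by (rule divide_right_mono[OF sum_le]) (use kp in simp)
    also have "\<dots> = real (card (cut_edges n E S)) / real (card S)" using kp by simp
    finally show ?thesis .
  qed
  define C where "C = {real (card (cut_edges n E S)) / real (card S) | S.
      S \<subseteq> {1..n} \<and> 0 < card S \<and> real (card S) \<le> real n / 2}"
  have finC: "finite C" unfolding C_def
    by (rule finite_image_set) (rule finite_subset[of _ "Pow {1..n}"], auto)
  have "{1} \<subseteq> {1..n} \<and> 0 < card {1::nat} \<and> real (card {1::nat}) \<le> real n / 2"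
    using assms by auto
  then have neC: "C \<noteq> {}" unfolding C_def by blast
  have "(analytic_conn n k E + beta_hg n k E) / real k \<le> Min C"
    using finC neC key unfolding C_def by (subst Min_ge_iff) auto
  then show ?thesis unfolding isoperimetric_def C_def .
qed

end
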